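(* Let $s_1^\pm,s_2^\pm\in\mathbb{R}^3$ satisfy $$|s_1^+-s_1^-|+|s_2^+-s_2^-|\le|s_1^+-s_2^-|+|s_2^+-s_1^-|,$$ and for $m=1,2$ let $L_m$ be the closed segment joining $s_m^+$ and $s_m^-$. Then $$\operatorname{dist}(L_1,L_2)\ge\frac1{\sqrt2}\min_{m\ne n}\operatorname{dist}(s_m^\pm,L_n),$$ where the minimum is over $m\neq n$ in $\{1,2\}$ and both choices of sign. *)

theory Defs
  imports "HOL-Analysis.Analysis"
begin

end

theory Submission
  imports Defs
begin

lemma scalar_key:
  fixes \<alpha> \<beta> \<gamma> \<eta> k h m :: real
  assumes "0 \<le> \<alpha>" "0 \<le> \<beta>" "0 \<le> \<gamma>" "0 \<le> \<eta>" "-1 \<le> k" "k \<le> 1" "0 \<le> m"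
    "m \<le> \<alpha>" "m \<le> \<beta>" "m \<le> \<gamma>" "m \<le> \<eta>"
    "\<alpha>+\<beta>+\<gamma>+\<eta> \<le> sqrt(h^2+\<alpha>^2+\<eta>^2+2*\<alpha>*\<eta>*k) + sqrt(h^2+\<beta>^2+\<gamma>^2+2*\<beta>*\<gamma>*k)"
  shows "m^2*(1-k^2) \<le> h^2"
proof (rule ccontr)
  assume "\<not> ?thesis"
  hence H: "h^2 < m^2*(1-k^2)" by simp
  have gen: "sqrt(h^2+x^2+y^2+2*x*y*k) < x + y" if "m \<le> x" "m \<le> y" for x y
  proof -
    have "m^2 \<le> x*y" using that \<open>0\<le>m\<close> by (metis mult_mono order_trans power2_eq_square)
    moreover have "0 \<le> 1 - k^2"
    proof -
      have "0 \<le> (1-k)*(1+k)" using assms(5,6) by (intro mult_nonneg_nonneg) auto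
      thus ?thesis by (simp add: algebra_simps power2_eq_square)
    qed
    ultimately have "m^2*(1-k^2) \<le> x*y*(1-k^2)" by (simp add: mult_right_mono)
    also have "\<dots> = x*y*(1-k)*(1+k)" by (simp add: algebra_simps power2_eq_square)
    also have "\<dots> \<le> x*y*(1-k)*2"
      using assms(6) \<open>0\<le>m\<close> that by (intro mult_left_mono) (auto intro!: mult_nonneg_nonneg)
    finally have "h^2 < 2*x*y*(1-k)" using H by simp
    hence "h^2+x^2+y^2+2*x*y*k < (x+y)^2" by (simp add: power2_eq_square algebra_simps)
    hence "sqrt(h^2+x^2+y^2+2*x*y*k) < sqrt((x+y)^2)" by (rule real_sqrt_less_mono)
    thus ?thesis using that \<open>0\<le>m\<close> by simp
  qed
  have "sqrt(h^2+\<alpha>^2+\<eta>^2+2*\<alpha>*\<eta>*k) < \<alpha> + \<eta>" using gen assms by simp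
  moreover have "sqrt(h^2+\<beta>^2+\<gamma>^2+2*\<beta>*\<gamma>*k) < \<beta> + \<gamma>" using gen assms by simp
  ultimately show False using assms(12) by linarith
qed

lemma expand_norm:
  fixes w u v :: "'a::real_inner"
  assumes "norm u = 1" "norm v = 1" "inner w u = 0" "inner w v = 0"
  shows "(norm (w + x *\<^sub>R u + y *\<^sub>R v))^2 = (norm w)^2 + x^2 + y^2 + 2*x*y*inner u v"
proof -
  have uu: "inner u u = 1" using assms(1) by (metis norm_eq_sqrt_inner real_sqrt_eq_1_iff)
  have vv: "inner v v = 1" using assms(2) by (metis norm_eq_sqrt_inner real_sqrt_eq_1_iff)
  show ?thesis
    unfolding power2_norm_eq_inner
    using assms(3,4) uu vv
    by (simp add: inner_add_left inner_add_right inner_commute power2_eq_square algebra_simps)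
qed

lemma endpoint_bound:
  fixes p q u v :: "'a::real_inner"
  assumes "norm u = 1" "norm v = 1" "inner (p-q) u = 0" "inner (p-q) v = 0"
    "\<bar>\<sigma>\<bar> \<le> \<gamma>" "\<bar>\<sigma>\<bar> \<le> \<eta>"
  shows "(infdist (p + \<sigma> *\<^sub>R u) (closed_segment (q - \<gamma> *\<^sub>R v) (q + \<eta> *\<^sub>R v)))^2
         \<le> (norm (p-q))^2 + \<sigma>^2*(1-(inner u v)^2)"
proof -
  define k where "k = inner u v"
  have kb: "\<bar>k\<bar> \<le> 1" using Cauchy_Schwarz_ineq2[of u v] assms by (simp add: k_def)
  hence sk: "\<bar>\<sigma>*k\<bar> \<le> \<bar>\<sigma>\<bar>" by (simp add: abs_mult mult_left_le)
  define f where "f = q + (\<sigma>*k) *\<^sub>R v"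
  have fin: "f \<in> closed_segment (q - \<gamma> *\<^sub>R v) (q + \<eta> *\<^sub>R v)"
  proof (cases "\<gamma> + \<eta> = 0")
    case True
    hence "\<gamma> = 0" "\<eta> = 0" "\<sigma> = 0" using assms(5,6) by auto
    thus ?thesis by (simp add: f_def)
  next
    case False
    hence pos: "\<gamma> + \<eta> > 0" using assms(5,6) by linarith
    define \<mu> where "\<mu> = (\<gamma> + \<sigma>*k)/(\<gamma>+\<eta>)"
    have m0: "0 \<le> \<mu>" using pos sk assms(5) by (simp add: \<mu>_def)
    have m1: "\<mu> \<le> 1" using pos sk assms(6) by (simp add: \<mu>_def)
    have mu: "\<mu>*(\<gamma>+\<eta>) = \<gamma> + \<sigma>*k" using pos by (simp add: \<mu>_def)
    have coef: "(1-\<mu>)*(-\<gamma>) + \<mu>*\<eta> = \<sigma>*k"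
    proof -
      have "(1-\<mu>)*(-\<gamma>) + \<mu>*\<eta> = \<mu>*(\<gamma>+\<eta>) - \<gamma>" by (simp add: algebra_simps)
      thus ?thesis using mu by simp
    qed
    have "(1 - \<mu>) *\<^sub>R (q - \<gamma> *\<^sub>R v) + \<mu> *\<^sub>R (q + \<eta> *\<^sub>R v) = q + ((1-\<mu>)*(-\<gamma>) + \<mu>*\<eta>) *\<^sub>R v"
      by (simp add: algebra_simps)
    hence "f = (1 - \<mu>) *\<^sub>R (q - \<gamma> *\<^sub>R v) + \<mu> *\<^sub>R (q + \<eta> *\<^sub>R v)" using coef by (simp add: f_def)
    thus ?thesis using m0 m1 by (auto simp: in_segment)
  qed
  have eq: "p + \<sigma> *\<^sub>R u - f = (p - q) + \<sigma> *\<^sub>R u + (-\<sigma>*k) *\<^sub>R v" by (simp add: f_def algebra_simps)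
  have "(dist (p + \<sigma> *\<^sub>R u) f)^2 = (norm (p-q))^2 + \<sigma>^2 + (-\<sigma>*k)^2 + 2*\<sigma>*(-\<sigma>*k)*k"
    unfolding dist_norm eq k_def by (rule expand_norm[OF assms(1-4)])
  also have "\<dots> = (norm (p-q))^2 + \<sigma>^2*(1-k^2)" by (simp add: power2_eq_square algebra_simps)
  finally have D: "(dist (p + \<sigma> *\<^sub>R u) f)^2 = (norm (p-q))^2 + \<sigma>^2*(1-k^2)" .
  have "infdist (p + \<sigma> *\<^sub>R u) (closed_segment (q - \<gamma> *\<^sub>R v) (q + \<eta> *\<^sub>R v)) \<le> dist (p + \<sigma> *\<^sub>R u) f"
    by (rule infdist_le[OF fin])
  hence "(infdist (p + \<sigma> *\<^sub>R u) (closed_segment (q - \<gamma> *\<^sub>R v) (q + \<eta> *\<^sub>R v)))^2 \<le> (dist (p + \<sigma> *\<^sub>R u) f)^2"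
    by (simp add: infdist_nonneg power_mono)
  hence "(infdist (p + \<sigma> *\<^sub>R u) (closed_segment (q - \<gamma> *\<^sub>R v) (q + \<eta> *\<^sub>R v)))^2 \<le> (norm (p-q))^2 + \<sigma>^2*(1-k^2)"
    by (simp only: D)
  thus ?thesis by (simp only: k_def)
qed

lemma final_step:
  fixes e h s :: real
  assumes "e^2 \<le> h^2 + s" "s \<le> h^2" "0 \<le> e" "0 \<le> h"
  shows "e \<le> sqrt 2 * h"
proof -
  have sq: "(sqrt 2 * h)^2 = 2*h^2" by (simp add: power_mult_distrib)
  have "e^2 \<le> (sqrt 2 * h)^2" unfolding sq using assms(1,2) by linarith
  moreover have "0 \<le> sqrt 2 * h" using assms(4) by simp
  ultimately show ?thesis by (rule power2_le_imp_le)
qed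

lemma endpoint_bound':
  fixes p q u v x y1 y2 :: "'a::real_inner"
  assumes "norm u = 1" "norm v = 1" "inner (p-q) u = 0" "inner (p-q) v = 0"
    "\<bar>\<sigma>\<bar> \<le> \<gamma>" "\<bar>\<sigma>\<bar> \<le> \<eta>"
    "x = p + \<sigma> *\<^sub>R u" "y1 = q - \<gamma> *\<^sub>R v" "y2 = q + \<eta> *\<^sub>R v"
  shows "(infdist x (closed_segment y1 y2))^2 \<le> (norm (p-q))^2 + \<sigma>^2*(1-(inner u v)^2)"
  using endpoint_bound[OF assms(1-6)] assms(7-9) by simp

theorem lemma5:
  fixes s1p s1m s2p s2m :: "real ^ 3"
  assumes "dist s1p s1m + dist s2p s2m \<le> dist s1p s2m + dist s2p s1m"
  shows "setdist (closed_segment s1p s1m) (closed_segment s2p s2m) \<ge>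
           (1 / sqrt 2) * Min {infdist s1p (closed_segment s2p s2m),
                               infdist s1m (closed_segment s2p s2m),
                               infdist s2p (closed_segment s1p s1m),
                               infdist s2m (closed_segment s1p s1m)}"
proof -
  let ?L1 = "closed_segment s1p s1m"
  let ?L2 = "closed_segment s2p s2m"
  obtain p q where p: "p \<in> ?L1" and q: "q \<in> ?L2" and pq: "dist p q = setdist ?L1 ?L2"
    using setdist_compact_closed[of ?L1 ?L2] by auto
  define h where "h = dist p q"
  have h0: "0 \<le> h" by (simp add: h_def)
  define S where "S = {infdist s1p ?L2, infdist s1m ?L2, infdist s2p ?L1, infdist s2m ?L1}"
  have minp: "\<forall>z\<in>?L1. dist q p \<le> dist q z"
    using pq setdist_le_dist[OF _ q] by (simp add: dist_commute)
  have minq: "\<forall>z\<in>?L2. dist p q \<le> dist p z"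
    using pq setdist_le_dist[OF p] by simp
  have key: "\<exists>e\<in>S. e \<le> sqrt 2 * h"
  proof (cases "p = s1p \<or> p = s1m \<or> q = s2p \<or> q = s2m")
    case True
    have hs: "h \<le> sqrt 2 * h" using h0 by (simp add: mult_le_cancel_right1)
    have "\<exists>e\<in>S. e \<le> h"
    proof -
      { assume "p = s1p" hence ?thesis using infdist_le[OF q, of s1p] by (auto simp: S_def h_def) }
      moreover
      { assume "p = s1m" hence ?thesis using infdist_le[OF q, of s1m] by (auto simp: S_def h_def) }
      moreover
      { assume "q = s2p" hence ?thesis using infdist_le[OF p, of s2p] by (auto simp: S_def h_def dist_commute) }
      moreover
      { assume "q = s2m" hence ?thesis using infdist_le[OF p, of s2m] by (auto simp: S_def h_def dist_commute) }
      ultimately show ?thesis using True by blast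
    qed
    thus ?thesis using hs by (meson order_trans)
  next
    case False
    obtain t where t0: "0 \<le> t" and t1: "t \<le> 1" and pt: "p = (1-t) *\<^sub>R s1p + t *\<^sub>R s1m"
      using p by (auto simp: in_segment)
    obtain r where r0: "0 \<le> r" and r1: "r \<le> 1" and qr: "q = (1-r) *\<^sub>R s2p + r *\<^sub>R s2m"
      using q by (auto simp: in_segment)
    have "t \<noteq> 0" using False pt by auto
    hence tpos: "0 < t" using t0 by simp
    have "t \<noteq> 1" using False pt by auto
    hence tlt: "t < 1" using t1 by simp
    have "r \<noteq> 0" using False qr by auto
    hence rpos: "0 < r" using r0 by simp
    have "r \<noteq> 1" using False qr by auto
    hence rlt: "r < 1" using r1 by simp
    have "s1p \<noteq> s1m" using False pt by (auto simp: algebra_simps)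
    hence n1: "norm (s1m - s1p) > 0" by simp
    have "s2p \<noteq> s2m" using False qr by (auto simp: algebra_simps)
    hence n2: "norm (s2m - s2p) > 0" by simp
    define u where "u = (1 / norm (s1m - s1p)) *\<^sub>R (s1m - s1p)"
    define v where "v = (1 / norm (s2m - s2p)) *\<^sub>R (s2m - s2p)"
    define \<alpha> where "\<alpha> = t * norm (s1m - s1p)"
    define \<beta> where "\<beta> = (1-t) * norm (s1m - s1p)"
    define \<gamma> where "\<gamma> = r * norm (s2m - s2p)"
    define \<eta> where "\<eta> = (1-r) * norm (s2m - s2p)"
    have u1: "norm u = 1" using n1 by (simp add: u_def)
    have v1: "norm v = 1" using n2 by (simp add: v_def)
    have au: "\<alpha> *\<^sub>R u = t *\<^sub>R (s1m - s1p)" using n1 by (simp add: u_def \<alpha>_def)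
    have bu: "\<beta> *\<^sub>R u = (1-t) *\<^sub>R (s1m - s1p)" using n1 by (simp add: u_def \<beta>_def)
    have cv: "\<gamma> *\<^sub>R v = r *\<^sub>R (s2m - s2p)" using n2 by (simp add: v_def \<gamma>_def)
    have dv: "\<eta> *\<^sub>R v = (1-r) *\<^sub>R (s2m - s2p)" using n2 by (simp add: v_def \<eta>_def)
    have pa: "s1p = p - \<alpha> *\<^sub>R u" unfolding au pt by (simp add: algebra_simps)
    have pb: "s1m = p + \<beta> *\<^sub>R u" unfolding bu pt by (simp add: algebra_simps)
    have qc: "s2p = q - \<gamma> *\<^sub>R v" unfolding cv qr by (simp add: algebra_simps)
    have qd: "s2m = q + \<eta> *\<^sub>R v" unfolding dv qr by (simp add: algebra_simps)
    have apos: "0 < \<alpha>" using tpos n1 by (simp add: \<alpha>_def)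
    have bpos: "0 < \<beta>" using tlt n1 by (simp add: \<beta>_def)
    have cpos: "0 < \<gamma>" using rpos n2 by (simp add: \<gamma>_def)
    have dpos: "0 < \<eta>" using rlt n2 by (simp add: \<eta>_def)
    have i1: "inner (q - p) (s1p - p) \<le> 0"
      by (rule any_closest_point_dot[OF convex_closed_segment closed_segment p _ minp]) simp
    have i2: "inner (q - p) (s1m - p) \<le> 0"
      by (rule any_closest_point_dot[OF convex_closed_segment closed_segment p _ minp]) simp
    have i3: "inner (p - q) (s2p - q) \<le> 0"
      by (rule any_closest_point_dot[OF convex_closed_segment closed_segment q _ minq]) simp
    have i4: "inner (p - q) (s2m - q) \<le> 0"
      by (rule any_closest_point_dot[OF convex_closed_segment closed_segment q _ minq]) simp
    have "- \<alpha> * inner (q - p) u \<le> 0" using i1 by (simp add: pa)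
    moreover have "\<beta> * inner (q - p) u \<le> 0" using i2 by (simp add: pb)
    ultimately have "0 \<le> inner (q - p) u" "inner (q - p) u \<le> 0" using apos bpos
      by (simp_all add: zero_le_mult_iff mult_le_0_iff)
    hence "inner (q - p) u = 0" by linarith
    hence pu: "inner (p - q) u = 0" by (simp add: inner_diff_left)
    have "- \<gamma> * inner (p - q) v \<le> 0" using i3 by (simp add: qc)
    moreover have "\<eta> * inner (p - q) v \<le> 0" using i4 by (simp add: qd)
    ultimately have "0 \<le> inner (p - q) v" "inner (p - q) v \<le> 0" using cpos dpos
      by (simp_all add: zero_le_mult_iff mult_le_0_iff)
    hence pv: "inner (p - q) v = 0" by linarith
    define k where "k = inner u v"
    have kb: "\<bar>k\<bar> \<le> 1" using Cauchy_Schwarz_ineq2[of u v] u1 v1 by (simp add: k_def)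
    have hw: "h = norm (p - q)" by (simp add: h_def dist_norm)
    have d1: "dist s1p s1m = \<alpha> + \<beta>"
    proof -
      have "s1p - s1m = (-(\<alpha>+\<beta>)) *\<^sub>R u" by (subst pa, subst pb) (simp add: algebra_simps)
      thus ?thesis using u1 apos bpos by (simp add: dist_norm)
    qed
    have d2: "dist s2p s2m = \<gamma> + \<eta>"
    proof -
      have "s2p - s2m = (-(\<gamma>+\<eta>)) *\<^sub>R v" by (subst qc, subst qd) (simp add: algebra_simps)
      thus ?thesis using v1 cpos dpos by (simp add: dist_norm)
    qed
    have d3: "dist s1p s2m = sqrt (h^2+\<alpha>^2+\<eta>^2+2*\<alpha>*\<eta>*k)"
    proof -
      have e: "s1p - s2m = (p - q) + (-\<alpha>) *\<^sub>R u + (-\<eta>) *\<^sub>R v" by (subst pa, subst qd) (simp add: algebra_simps)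
      have "(norm (s1p - s2m))^2 = h^2+\<alpha>^2+\<eta>^2+2*\<alpha>*\<eta>*k"
        unfolding e using expand_norm[OF u1 v1 pu pv, of "-\<alpha>" "-\<eta>"] by (simp add: hw k_def)
      thus ?thesis by (simp add: dist_norm real_sqrt_unique)
    qed
    have d4: "dist s2p s1m = sqrt (h^2+\<beta>^2+\<gamma>^2+2*\<beta>*\<gamma>*k)"
    proof -
      have e: "s2p - s1m = - ((p - q) + \<beta> *\<^sub>R u + \<gamma> *\<^sub>R v)" by (subst qc, subst pb) (simp add: algebra_simps)
      have "(norm (s2p - s1m))^2 = h^2+\<beta>^2+\<gamma>^2+2*\<beta>*\<gamma>*k"
        unfolding e norm_minus_cancel using expand_norm[OF u1 v1 pu pv, of "\<beta>" "\<gamma>"] by (simp add: hw k_def)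
      thus ?thesis by (simp add: dist_norm real_sqrt_unique)
    qed
    have hyp: "\<alpha>+\<beta>+\<gamma>+\<eta> \<le> sqrt(h^2+\<alpha>^2+\<eta>^2+2*\<alpha>*\<eta>*k) + sqrt(h^2+\<beta>^2+\<gamma>^2+2*\<beta>*\<gamma>*k)"
      using assms d1 d2 d3 d4 by simp
    have sc: "m^2*(1-k^2) \<le> h^2" if "0 \<le> m" "m \<le> \<alpha>" "m \<le> \<beta>" "m \<le> \<gamma>" "m \<le> \<eta>" for m
      by (rule scalar_key[OF _ _ _ _ _ _ that hyp]) (use apos bpos cpos dpos kb in auto)
    have qp: "inner (q - p) v = 0" "inner (q - p) u = 0" using pu pv by (simp_all add: inner_diff_left)
    have nqp: "norm (q - p) = h" using hw by (simp add: norm_minus_commute)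
    have vu: "inner v u = k" by (simp add: k_def inner_commute)
    have "(\<alpha> \<le> \<beta> \<and> \<alpha> \<le> \<gamma> \<and> \<alpha> \<le> \<eta>) \<or> (\<beta> \<le> \<alpha> \<and> \<beta> \<le> \<gamma> \<and> \<beta> \<le> \<eta>)
        \<or> (\<gamma> \<le> \<alpha> \<and> \<gamma> \<le> \<beta> \<and> \<gamma> \<le> \<eta>) \<or> (\<eta> \<le> \<alpha> \<and> \<eta> \<le> \<beta> \<and> \<eta> \<le> \<gamma>)" by linarith
    moreover
    { assume m: "\<alpha> \<le> \<beta> \<and> \<alpha> \<le> \<gamma> \<and> \<alpha> \<le> \<eta>"
      have E: "(infdist s1p ?L2)^2 \<le> h^2 + (-\<alpha>)^2*(1-k^2)"
        using endpoint_bound'[OF u1 v1 pu pv, of "-\<alpha>" \<gamma> \<eta> s1p s2p s2m] m apos pa qc qd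
        by (simp add: hw k_def)
      have "infdist s1p ?L2 \<le> sqrt 2 * h"
        by (rule final_step[OF E]) (use sc[of \<alpha>] m apos h0 infdist_nonneg in auto)
      hence ?thesis by (auto simp: S_def) }
    moreover
    { assume m: "\<beta> \<le> \<alpha> \<and> \<beta> \<le> \<gamma> \<and> \<beta> \<le> \<eta>"
      have E: "(infdist s1m ?L2)^2 \<le> h^2 + \<beta>^2*(1-k^2)"
        using endpoint_bound'[OF u1 v1 pu pv, of "\<beta>" \<gamma> \<eta> s1m s2p s2m] m bpos pb qc qd
        by (simp add: hw k_def)
      have "infdist s1m ?L2 \<le> sqrt 2 * h"
        by (rule final_step[OF E]) (use sc[of \<beta>] m bpos h0 infdist_nonneg in auto)
      hence ?thesis by (auto simp: S_def) }
    moreover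
    { assume m: "\<gamma> \<le> \<alpha> \<and> \<gamma> \<le> \<beta> \<and> \<gamma> \<le> \<eta>"
      have E: "(infdist s2p ?L1)^2 \<le> h^2 + (-\<gamma>)^2*(1-k^2)"
        using endpoint_bound'[OF v1 u1 qp, of "-\<gamma>" \<alpha> \<beta> s2p s1p s1m] m cpos pa pb qc
        by (simp add: nqp vu)
      have "infdist s2p ?L1 \<le> sqrt 2 * h"
        by (rule final_step[OF E]) (use sc[of \<gamma>] m cpos h0 infdist_nonneg in auto)
      hence ?thesis by (auto simp: S_def) }
    moreover
    { assume m: "\<eta> \<le> \<alpha> \<and> \<eta> \<le> \<beta> \<and> \<eta> \<le> \<gamma>"
      have E: "(infdist s2m ?L1)^2 \<le> h^2 + \<eta>^2*(1-k^2)"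
        using endpoint_bound'[OF v1 u1 qp, of "\<eta>" \<alpha> \<beta> s2m s1p s1m] m dpos pa pb qd
        by (simp add: nqp vu)
      have "infdist s2m ?L1 \<le> sqrt 2 * h"
        by (rule final_step[OF E]) (use sc[of \<eta>] m dpos h0 infdist_nonneg in auto)
      hence ?thesis by (auto simp: S_def) }
    ultimately show ?thesis by blast
  qed
  then obtain e where eS: "e \<in> S" and e: "e \<le> sqrt 2 * h" by blast
  have "Min S \<le> e" using eS by (simp add: S_def del: Min_insert)
  hence M: "Min S \<le> sqrt 2 * h" using e by linarith
  have "(1 / sqrt 2) * Min S \<le> (1 / sqrt 2) * (sqrt 2 * h)"
    using M by (intro mult_left_mono) auto
  also have "\<dots> = h" by simp
  finally show ?thesis unfolding S_def h_def pq by simp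
qed

end
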